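(* For every single-use two-way automaton there is a number $N\in\mathbb N$ such that for every string $u$ over $\Sigma+\{\vdash,\dashv\}$, the Shepherdson profile of $u$ is supported by a tuple of at most $N$ atoms.
   Context: Atoms, atom automorphisms, polynomial orbit-finite sets, supports (an element $x$ is supported by $\bar a\in\mathbb A^*$ if every atom automorphism fixing $\bar a$ pointwise fixes $x$; automorphisms act on functions by $\pi(f)=\pi\circ f\circ\pi^{-1}$) and single-use two-way automata are as follows. Fix a countably infinite set $\mathbb A$ of atoms; a polynomial orbit-finite set is built from $\mathbb A$ and singletons by finite products and disjoint unions. A single-use two-way automaton has a polynomial orbit-finite input alphabet $\Sigma$, finitely many states $Q$, finitely many registers (say $k$) holding atoms or $\bot$, and a deterministic transition function assigning to each state a question and, for each answer, a next state and an action. Questions: apply an equivariant function $\Sigma+\{\vdash,\dashv\}\to\{\mathrm{yes},\mathrm{no}\}$ to the letter under the head; or test equality of the atoms in two registers (rejecting if one is $\bot$), after which both registers are set to $\bot$ (single-use restriction). Actions: store the value of an equivariant function $\Sigma+\{\vdash,\dashv\}\to\mathbb A+\bot$ of the current letter in a register; move the head left or right; accept or reject. The Shepherdson profile of $u$ is the function $Q\times(\mathbb A+\bot)^k\times\{\leftarrow,\rightarrow\}\to\{\mathrm{accept},\mathrm{loop}\}+Q\times(\mathbb A+\bot)^k\times\{\leftarrow,\rightarrow\}$ mapping $(q,\eta,d)$ to the outcome of running the automaton on $u$ from state $q$ with register valuation $\eta$, starting at the leftmost position of $u$ if $d$ says the run enters from the left and at the rightmost position otherwise, until the head leaves $u$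 (outcome: the state, register valuation and side on which it exits), or it accepts (outcome accept), or it rejects or runs forever (outcome loop). *)

theory Defs
  imports Main
begin

type_synonym atom = nat

definition atom_aut :: "(atom \<Rightarrow> atom) \<Rightarrow> bool" where
  "atom_aut \<pi> \<longleftrightarrow> bij \<pi>"

text \<open>Syntax of polynomial orbit-finite sets: built from the atoms and singletons
  by binary (hence finite) products and disjoint unions.\<close>
datatype pof = PAtoms | PSingleton | PProd pof pof | PSum pof pof

datatype val = VAtom atom | VUnit | VPair val val | VInl val | VInr val

fun pof_set :: "pof \<Rightarrow> val set" where
  "pof_set PAtoms = range VAtom"
| "pof_set PSingleton = {VUnit}"
| "pof_set (PProd s t) = {VPair x y | x y. x \<in> pof_set s \<and> y \<in> pof_set t}"
| "pof_set (PSum s t) = VInl ` pof_set s \<union> VInr ` pof_set t"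

fun val_perm :: "(atom \<Rightarrow> atom) \<Rightarrow> val \<Rightarrow> val" where
  "val_perm \<pi> (VAtom a) = VAtom (\<pi> a)"
| "val_perm \<pi> VUnit = VUnit"
| "val_perm \<pi> (VPair x y) = VPair (val_perm \<pi> x) (val_perm \<pi> y)"
| "val_perm \<pi> (VInl x) = VInl (val_perm \<pi> x)"
| "val_perm \<pi> (VInr x) = VInr (val_perm \<pi> x)"

datatype letter = Sym val | LMark | RMark

definition letters :: "pof \<Rightarrow> letter set" where
  "letters \<Sigma> = Sym ` pof_set \<Sigma> \<union> {LMark, RMark}"

fun letter_perm :: "(atom \<Rightarrow> atom) \<Rightarrow> letter \<Rightarrow> letter" where
  "letter_perm \<pi> (Sym x) = Sym (val_perm \<pi> x)"
| "letter_perm \<pi> LMark = LMark"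
| "letter_perm \<pi> RMark = RMark"

text \<open>Equivariant functions (on \<Sigma> + {\<turnstile>,\<stileturn>}) into {yes,no} and into \<bbbA> + \<bottom>
  (None plays the role of \<bottom>).\<close>
definition equiv_test :: "pof \<Rightarrow> (letter \<Rightarrow> bool) \<Rightarrow> bool" where
  "equiv_test \<Sigma> f \<longleftrightarrow>
     (\<forall>\<pi> x. atom_aut \<pi> \<longrightarrow> x \<in> letters \<Sigma> \<longrightarrow> f (letter_perm \<pi> x) = f x)"

definition equiv_store :: "pof \<Rightarrow> (letter \<Rightarrow> atom option) \<Rightarrow> bool" where
  "equiv_store \<Sigma> g \<longleftrightarrow>
     (\<forall>\<pi> x. atom_aut \<pi> \<longrightarrow> x \<in> letters \<Sigma> \<longrightarrow> g (letter_perm \<pi> x) = map_option \<pi> (g x))"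

datatype question = QTest "letter \<Rightarrow> bool" | QEq nat nat

datatype action = AStore nat "letter \<Rightarrow> atom option" | ALeft | ARight | AAccept | AReject

text \<open>The transition function gives, for each
  state, a question and, for each answer (True = yes), a next state and an action.\<close>
record 'q sutwa =
  alph :: pof
  nregs :: nat
  delta :: "'q \<Rightarrow> question \<times> (bool \<Rightarrow> 'q \<times> action)"

definition wf_sutwa :: "('q::finite) sutwa \<Rightarrow> bool" where
  "wf_sutwa A \<longleftrightarrow>
     (\<forall>q. case fst (delta A q) of
             QTest f \<Rightarrow> equiv_test (alph A) f
           | QEq i j \<Rightarrow> i < nregs A \<and> j < nregs A) \<and>
     (\<forall>q b. case snd (snd (delta A q) b) of
             AStore i g \<Rightarrow> i < nregs A \<and> equiv_store (alph A) g
           | _ \<Rightarrow> True)"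

datatype side = LeftSide | RightSide

type_synonym regs = "atom option list"

type_synonym 'q config = "'q \<times> regs \<times> int"

datatype 'q stepres = Cont "'q config" | Halt bool

definition inside :: "letter list \<Rightarrow> 'q config \<Rightarrow> bool" where
  "inside u c \<longleftrightarrow> (case c of (q, \<eta>, p) \<Rightarrow> 0 \<le> p \<and> p < int (length u))"

definition do_action :: "letter list \<Rightarrow> 'q \<Rightarrow> action \<Rightarrow> regs \<Rightarrow> int \<Rightarrow> 'q stepres" where
  "do_action u q' a \<eta> p = (case a of
       AStore i g \<Rightarrow> Cont (q', \<eta>[i := g (u ! nat p)], p)
     | ALeft \<Rightarrow> Cont (q', \<eta>, p - 1)
     | ARight \<Rightarrow> Cont (q', \<eta>, p + 1)
     | AAccept \<Rightarrow> Halt True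
     | AReject \<Rightarrow> Halt False)"

definition step :: "'q sutwa \<Rightarrow> letter list \<Rightarrow> 'q config \<Rightarrow> 'q stepres" where
  "step A u c = (case c of (q, \<eta>, p) \<Rightarrow>
     (case delta A q of (qu, resp) \<Rightarrow>
       (case qu of
          QTest f \<Rightarrow> (case resp (f (u ! nat p)) of (q', a) \<Rightarrow> do_action u q' a \<eta> p)
        | QEq i j \<Rightarrow>
            (if \<eta> ! i = None \<or> \<eta> ! j = None then Halt False
             else (case resp (\<eta> ! i = \<eta> ! j) of
                     (q', a) \<Rightarrow> do_action u q' a (\<eta>[i := None, j := None]) p)))))"

definition next_rel :: "'q sutwa \<Rightarrow> letter list \<Rightarrow> 'q config \<Rightarrow> 'q config \<Rightarrow> bool" where
  "next_rel A u c c' \<longleftrightarrow> inside u c \<and> step A u c = Cont c'"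

definition reaches :: "'q sutwa \<Rightarrow> letter list \<Rightarrow> 'q config \<Rightarrow> 'q config \<Rightarrow> bool" where
  "reaches A u = (next_rel A u)\<^sup>*\<^sup>*"

datatype 'q outcome = OAccept | OLoop | OExit 'q regs side

definition start_config :: "letter list \<Rightarrow> 'q \<Rightarrow> regs \<Rightarrow> side \<Rightarrow> 'q config" where
  "start_config u q \<eta> d =
     (q, \<eta>, (case d of LeftSide \<Rightarrow> 0 | RightSide \<Rightarrow> int (length u) - 1))"

definition exit_outcome :: "letter list \<Rightarrow> 'q config \<Rightarrow> 'q outcome" where
  "exit_outcome u c = (case c of (q, \<eta>, p) \<Rightarrow>
      OExit q \<eta> (if p < 0 then LeftSide else RightSide))"

text \<open>Outcome of running from a configuration until the head leaves u (exit), or it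
  accepts; rejecting or running forever gives OLoop.\<close>
definition run_outcome :: "'q sutwa \<Rightarrow> letter list \<Rightarrow> 'q config \<Rightarrow> 'q outcome" where
  "run_outcome A u c =
     (if \<exists>c'. reaches A u c c' \<and> inside u c' \<and> step A u c' = Halt True then OAccept
      else if \<exists>c'. reaches A u c c' \<and> \<not> inside u c'
        then exit_outcome u (THE c'. reaches A u c c' \<and> \<not> inside u c')
      else OLoop)"

text \<open>The Shepherdson profile, as a partial function whose domain is
  Q \<times> (\<bbbA>+\<bottom>)^k \<times> {\<leftarrow>,\<rightarrow>} (valuations are the lists of length k).\<close>
definition shepherdson_profile ::
    "('q::finite) sutwa \<Rightarrow> letter list \<Rightarrow> ('q \<times> regs \<times> side) \<rightharpoonup> 'q outcome" where
  "shepherdson_profile A u = (\<lambda>(q, \<eta>, d).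
     if length \<eta> = nregs A then Some (run_outcome A u (start_config u q \<eta> d)) else None)"

definition regs_perm :: "(atom \<Rightarrow> atom) \<Rightarrow> regs \<Rightarrow> regs" where
  "regs_perm \<pi> \<eta> = map (map_option \<pi>) \<eta>"

fun outcome_perm :: "(atom \<Rightarrow> atom) \<Rightarrow> 'q outcome \<Rightarrow> 'q outcome" where
  "outcome_perm \<pi> OAccept = OAccept"
| "outcome_perm \<pi> OLoop = OLoop"
| "outcome_perm \<pi> (OExit q \<eta> d) = OExit q (regs_perm \<pi> \<eta>) d"

definition profile_perm ::
    "(atom \<Rightarrow> atom) \<Rightarrow> (('q \<times> regs \<times> side) \<rightharpoonup> 'q outcome) \<Rightarrow> (('q \<times> regs \<times> side) \<rightharpoonup> 'q outcome)" where
  "profile_perm \<pi> f = (\<lambda>(q, \<eta>, d). map_option (outcome_perm \<pi>) (f (q, regs_perm (inv \<pi>) \<eta>, d)))"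

definition supports_profile :: "atom list \<Rightarrow> (('q \<times> regs \<times> side) \<rightharpoonup> 'q outcome) \<Rightarrow> bool" where
  "supports_profile as f \<longleftrightarrow>
     (\<forall>\<pi>. atom_aut \<pi> \<longrightarrow> (\<forall>a\<in>set as. \<pi> a = a) \<longrightarrow> profile_perm \<pi> f = f)"

end

theory Submission imports Defs begin

lemma reaches_noninside: "\<not> inside u c \<Longrightarrow> reaches A u c x \<longleftrightarrow> x = c"
proof
  assume "\<not> inside u c" "reaches A u c x"
  then show "x = c" unfolding reaches_def
    by (metis converse_rtranclpE next_rel_def)
qed (simp add: reaches_def)

lemma run_noninside: "\<not> inside u c \<Longrightarrow> run_outcome A u c = exit_outcome u c"
proof -
  assume a: "\<not> inside u c"
  have "(THE c'. reaches A u c c' \<and> \<not> inside u c') = c"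
    by (rule the_equality) (auto simp: reaches_noninside a)
  then show ?thesis unfolding run_outcome_def using a by (auto simp: reaches_noninside)
qed

lemma reaches_halt: "inside u c \<Longrightarrow> step A u c = Halt b \<Longrightarrow> reaches A u c x \<longleftrightarrow> x = c"
proof
  assume "inside u c" "step A u c = Halt b" "reaches A u c x"
  then show "x = c" unfolding reaches_def
    by (metis converse_rtranclpE next_rel_def stepres.distinct(1))
qed (simp add: reaches_def)

lemma run_halt: "inside u c \<Longrightarrow> step A u c = Halt b \<Longrightarrow>
   run_outcome A u c = (if b then OAccept else OLoop)"
proof -
  assume a: "inside u c" "step A u c = Halt b"
  have e: "\<And>x. reaches A u c x \<longleftrightarrow> x = c" using reaches_halt[OF a] .
  show ?thesis unfolding run_outcome_def e using a by auto
qed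

lemma reaches_cont: "inside u c \<Longrightarrow> step A u c = Cont c' \<Longrightarrow>
   reaches A u c x \<longleftrightarrow> x = c \<or> reaches A u c' x"
proof
  assume a: "inside u c" "step A u c = Cont c'" "reaches A u c x"
  from a(3) have "x = c \<or> (\<exists>y. next_rel A u c y \<and> reaches A u y x)"
    unfolding reaches_def by (induction rule: converse_rtranclp_induct) auto
  then show "x = c \<or> reaches A u c' x" using a(2) by (metis next_rel_def stepres.inject)
next
  assume a: "inside u c" "step A u c = Cont c'" "x = c \<or> reaches A u c' x"
  have "next_rel A u c c'" using a by (simp add: next_rel_def)
  then show "reaches A u c x" using a(3) unfolding reaches_def
    by (auto intro: converse_rtranclp_into_rtranclp)
qed

lemma run_cont: "inside u c \<Longrightarrow> step A u c = Cont c' \<Longrightarrow>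
   run_outcome A u c = run_outcome A u c'"
proof -
  assume a: "inside u c" "step A u c = Cont c'"
  have e: "\<And>x. reaches A u c x \<longleftrightarrow> x = c \<or> reaches A u c' x" using reaches_cont[OF a] .
  have e1: "(\<exists>x. reaches A u c x \<and> inside u x \<and> step A u x = Halt True)
          = (\<exists>x. reaches A u c' x \<and> inside u x \<and> step A u x = Halt True)"
    using a by (auto simp: e)
  have e2: "\<And>x. (reaches A u c x \<and> \<not> inside u x) = (reaches A u c' x \<and> \<not> inside u x)"
    using a by (auto simp: e)
  show ?thesis unfolding run_outcome_def e1 e2 ..
qed

lemma run_loop: "\<not> (\<exists>x. reaches A u c x \<and> (\<not> inside u x \<or> (\<exists>b. step A u x = Halt b)))
   \<Longrightarrow> run_outcome A u c = OLoop"
  unfolding run_outcome_def by auto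

definition term_in :: "'q sutwa \<Rightarrow> letter list \<Rightarrow> nat \<Rightarrow> 'q config \<Rightarrow> bool" where
  "term_in A u n c \<longleftrightarrow> (\<exists>x. (next_rel A u ^^ n) c x \<and> (\<not> inside u x \<or> (\<exists>b. step A u x = Halt b)))"

lemma G:
  assumes i: "\<And>c1 c2. R c1 c2 \<Longrightarrow> inside u c1 = inside u c2"
  and e: "\<And>c1 c2. R c1 c2 \<Longrightarrow> \<not> inside u c1 \<Longrightarrow> exit_outcome u c1 = outcome_perm \<pi> (exit_outcome u c2)"
  and s: "\<And>c1 c2. R c1 c2 \<Longrightarrow> inside u c1 \<Longrightarrow>
     (\<exists>b. step A u c1 = Halt b \<and> step A u c2 = Halt b) \<or>
     (\<exists>c1' c2'. step A u c1 = Cont c1' \<and> step A u c2 = Cont c2' \<and> R c1' c2') \<or>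
     run_outcome A u c1 = outcome_perm \<pi> (run_outcome A u c2)"
  and r: "R c1 c2"
  shows "run_outcome A u c1 = outcome_perm \<pi> (run_outcome A u c2)"
proof -
  have base: "run_outcome A u c1 = outcome_perm \<pi> (run_outcome A u c2)"
    if "R c1 c2" "\<not> inside u c1 \<or> (\<exists>b. step A u c1 = Halt b) \<or> \<not> inside u c2 \<or> (\<exists>b. step A u c2 = Halt b)"
    for c1 c2
  proof (cases "inside u c1")
    case False
    then show ?thesis using that i[OF that(1)] e[OF that(1)] by (simp add: run_noninside)
  next
    case True
    then have True2: "inside u c2" using i[OF that(1)] by simp
    from s[OF that(1) True] show ?thesis
    proof (elim disjE exE conjE)
      fix b assume "step A u c1 = Halt b" "step A u c2 = Halt b"
      then show ?thesis using True True2 by (simp add: run_halt)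
    next
      fix c1' c2' assume "step A u c1 = Cont c1'" "step A u c2 = Cont c2'"
      then show ?thesis using that True True2 by auto
    qed
  qed
  have left: "\<And>c1 c2. R c1 c2 \<Longrightarrow> term_in A u n c1 \<Longrightarrow> run_outcome A u c1 = outcome_perm \<pi> (run_outcome A u c2)" for n
  proof (induction n)
    case 0
    then show ?case using base by (auto simp: term_in_def)
  next
    case (Suc n c1 c2)
    then obtain x y where xy: "next_rel A u c1 y" "(next_rel A u ^^ n) y x"
      "\<not> inside u x \<or> (\<exists>b. step A u x = Halt b)"
      unfolding term_in_def by (metis relpowp_Suc_D2)
    then have ins: "inside u c1" "step A u c1 = Cont y" by (auto simp: next_rel_def)
    have ins2: "inside u c2" using i[OF Suc.prems(1)] ins by simp
    from s[OF Suc.prems(1) ins(1)] show ?case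
    proof (elim disjE exE conjE)
      fix c1' c2' assume h: "step A u c1 = Cont c1'" "step A u c2 = Cont c2'" "R c1' c2'"
      have "y = c1'" using h ins by simp
      then have "term_in A u n c1'" using xy unfolding term_in_def by blast
      then show ?thesis using Suc.IH[OF h(3)] h ins ins2 by (simp add: run_cont)
    qed (use ins in auto)
  qed
  have right: "\<And>c1 c2. R c1 c2 \<Longrightarrow> term_in A u n c2 \<Longrightarrow> run_outcome A u c1 = outcome_perm \<pi> (run_outcome A u c2)" for n
  proof (induction n)
    case 0
    then show ?case using base by (auto simp: term_in_def)
  next
    case (Suc n c1 c2)
    then obtain x y where xy: "next_rel A u c2 y" "(next_rel A u ^^ n) y x"
      "\<not> inside u x \<or> (\<exists>b. step A u x = Halt b)"
      unfolding term_in_def by (metis relpowp_Suc_D2)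
    then have ins2: "inside u c2" "step A u c2 = Cont y" by (auto simp: next_rel_def)
    have ins: "inside u c1" using i[OF Suc.prems(1)] ins2 by simp
    from s[OF Suc.prems(1) ins] show ?case
    proof (elim disjE exE conjE)
      fix c1' c2' assume h: "step A u c1 = Cont c1'" "step A u c2 = Cont c2'" "R c1' c2'"
      have "y = c2'" using h ins2 by simp
      then have "term_in A u n c2'" using xy unfolding term_in_def by blast
      then show ?thesis using Suc.IH[OF h(3)] h ins ins2 by (simp add: run_cont)
    qed (use ins2 in auto)
  qed
  show ?thesis
  proof (cases "\<exists>n. term_in A u n c1 \<or> term_in A u n c2")
    case True
    then show ?thesis using left right r by blast
  next
    case False
    then have "\<not> (\<exists>x. reaches A u c x \<and> (\<not> inside u x \<or> (\<exists>b. step A u x = Halt b)))"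
      if "c = c1 \<or> c = c2" for c
      using that unfolding term_in_def reaches_def by (metis rtranclp_power)
    then have "run_outcome A u c1 = OLoop" "run_outcome A u c2 = OLoop"
      by (metis run_loop)+
    then show ?thesis by simp
  qed
qed


type_synonym 'q aconf = "'q \<times> regs \<times> int \<times> nat set"
datatype 'q ares = ACont "'q aconf" | AHalt bool | AExit | ABranch

definition ado :: "letter list \<Rightarrow> 'q \<Rightarrow> action \<Rightarrow> regs \<Rightarrow> int \<Rightarrow> nat set \<Rightarrow> 'q ares" where
  "ado u q' a \<sigma> p X = (case a of
       AStore i g \<Rightarrow> ACont (q', \<sigma>[i := g (u ! nat p)], p, X - {i})
     | ALeft \<Rightarrow> ACont (q', \<sigma>, p - 1, X)
     | ARight \<Rightarrow> ACont (q', \<sigma>, p + 1, X)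
     | AAccept \<Rightarrow> AHalt True
     | AReject \<Rightarrow> AHalt False)"

definition astep :: "'q sutwa \<Rightarrow> letter list \<Rightarrow> 'q aconf \<Rightarrow> 'q ares" where
  "astep A u a = (case a of (q, \<sigma>, p, X) \<Rightarrow>
     if \<not> (0 \<le> p \<and> p < int (length u)) then AExit else
     (case delta A q of (qu, resp) \<Rightarrow>
       (case qu of
          QTest f \<Rightarrow> (case resp (f (u ! nat p)) of (q', ac) \<Rightarrow> ado u q' ac \<sigma> p X)
        | QEq i j \<Rightarrow>
            (if i \<in> X \<or> j \<in> X then ABranch
             else if \<sigma> ! i = None \<or> \<sigma> ! j = None then AHalt False
             else (case resp (\<sigma> ! i = \<sigma> ! j) of
                     (q', ac) \<Rightarrow> ado u q' ac (\<sigma>[i := None, j := None]) p X)))))"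

definition agree :: "nat \<Rightarrow> (atom \<Rightarrow> atom) \<Rightarrow> regs \<Rightarrow> nat set \<Rightarrow> regs \<Rightarrow> regs \<Rightarrow> bool" where
  "agree k \<pi> \<sigma> X \<eta>1 \<eta>2 \<longleftrightarrow> length \<sigma> = k \<and> length \<eta>1 = k \<and> length \<eta>2 = k \<and> X \<subseteq> {..<k} \<and>
     (\<forall>i<k. i \<notin> X \<longrightarrow> \<eta>1 ! i = \<sigma> ! i \<and> \<eta>2 ! i = \<sigma> ! i) \<and>
     (\<forall>i\<in>X. \<eta>1 ! i = map_option \<pi> (\<eta>2 ! i))"

lemma wf_eq: assumes wf: "wf_sutwa A" and d: "delta A q = (QEq i j, resp)" shows "i < nregs A \<and> j < nregs A"
proof -
  have "case fst (delta A q) of QTest f \<Rightarrow> equiv_test (alph A) f | QEq i j \<Rightarrow> i < nregs A \<and> j < nregs A"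
    using wf unfolding wf_sutwa_def by blast
  then show ?thesis using d by simp
qed

lemma wf_store: assumes wf: "wf_sutwa A" and d: "delta A q = (qu, resp)" and r: "resp b = (q', AStore l g)"
  shows "l < nregs A"
proof -
  have "case snd (snd (delta A q) b) of AStore i g \<Rightarrow> i < nregs A \<and> equiv_store (alph A) g | _ \<Rightarrow> True"
    using wf unfolding wf_sutwa_def by blast
  then show ?thesis using d r by simp
qed

lemma ado_cont:
  assumes "agree k \<pi> \<sigma> X \<eta>1 \<eta>2" "\<And>l g. act = AStore l g \<Longrightarrow> l < k"
    "ado u q' act \<sigma> p X = ACont (q'', \<sigma>', p', O')"
  shows "\<exists>\<eta>1' \<eta>2'. do_action u q' act \<eta>1 p = Cont (q'', \<eta>1', p') \<and>
     do_action u q' act \<eta>2 p = Cont (q'', \<eta>2', p') \<and> agree k \<pi> \<sigma>' O' \<eta>1' \<eta>2'"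
  using assms
  by (cases act) (auto simp: ado_def do_action_def agree_def nth_list_update)

lemma ado_halt:
  assumes "ado u q' act \<sigma> p X = AHalt b"
  shows "do_action u q' act \<eta> p = Halt b"
  using assms by (cases act) (auto simp: ado_def do_action_def)

lemma ado_cases: "ado u q' act \<sigma> p X \<noteq> AExit \<and> ado u q' act \<sigma> p X \<noteq> ABranch"
  by (cases act) (auto simp: ado_def)

lemma ado_sub: "ado u q' act \<sigma> p X = ACont (q'', \<sigma>', p', O') \<Longrightarrow> O' \<subseteq> X \<and> length \<sigma>' = length \<sigma>"
  by (cases act) (auto simp: ado_def)

lemma agree_clear:
  "agree k \<pi> \<sigma> X \<eta>1 \<eta>2 \<Longrightarrow> i < k \<Longrightarrow> j < k \<Longrightarrow>
   agree k \<pi> (\<sigma>[i := None, j := None]) (X - {i, j}) (\<eta>1[i := None, j := None]) (\<eta>2[i := None, j := None])"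
  by (auto simp: agree_def nth_list_update)

lemma inside_p: "inside u (q, \<eta>, p) \<longleftrightarrow> 0 \<le> p \<and> p < int (length u)"
  by (simp add: inside_def)

lemma astep_in: "0 \<le> p \<and> p < int (length u) \<Longrightarrow> delta A q = (qu, resp) \<Longrightarrow>
  astep A u (q, \<sigma>, p, X) = (case qu of
          QTest f \<Rightarrow> (case resp (f (u ! nat p)) of (q', ac) \<Rightarrow> ado u q' ac \<sigma> p X)
        | QEq i j \<Rightarrow>
            (if i \<in> X \<or> j \<in> X then ABranch
             else if \<sigma> ! i = None \<or> \<sigma> ! j = None then AHalt False
             else (case resp (\<sigma> ! i = \<sigma> ! j) of
                     (q', ac) \<Rightarrow> ado u q' ac (\<sigma>[i := None, j := None]) p X)))"
  by (simp add: astep_def)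

lemma astep_out: "\<not> (0 \<le> p \<and> p < int (length u)) \<Longrightarrow> astep A u (q, \<sigma>, p, X) = AExit"
  by (simp add: astep_def)

lemma astep_exit:
  assumes st: "astep A u (q, \<sigma>, p, X) = AExit" shows "\<not> inside u (q, \<eta>, p)"
proof
  assume "inside u (q, \<eta>, p)"
  then have ins: "0 \<le> p \<and> p < int (length u)" by (simp add: inside_p)
  obtain qu resp where d: "delta A q = (qu, resp)" by fastforce
  show False
  proof (cases qu)
    case (QTest f)
    obtain q' ac where r: "resp (f (u ! nat p)) = (q', ac)" by fastforce
    show False using st astep_in[OF ins d] QTest r by (simp add: ado_cases)
  next
    case (QEq i j)
    obtain q' ac where r: "resp (\<sigma> ! i = \<sigma> ! j) = (q', ac)" by fastforce
    show False using st astep_in[OF ins d] QEq r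
      by (cases "i \<in> X \<or> j \<in> X"; cases "\<sigma> ! i = None \<or> \<sigma> ! j = None") (simp_all add: ado_cases)
  qed
qed

lemma astep_branch:
  assumes st: "astep A u (q, \<sigma>, p, X) = ABranch"
  shows "0 \<le> p \<and> p < int (length u) \<and> (\<exists>i j resp. delta A q = (QEq i j, resp) \<and> (i \<in> X \<or> j \<in> X))"
proof -
  have ins: "0 \<le> p \<and> p < int (length u)" using st astep_out[of p u A q \<sigma> X] by auto
  obtain qu resp where d: "delta A q = (qu, resp)" by fastforce
  show ?thesis
  proof (cases qu)
    case (QTest f)
    obtain q' ac where r: "resp (f (u ! nat p)) = (q', ac)" by fastforce
    show ?thesis using st astep_in[OF ins d] QTest r by (simp add: ado_cases)
  next
    case (QEq i j)
    obtain q' ac where r: "resp (\<sigma> ! i = \<sigma> ! j) = (q', ac)" by fastforce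
    show ?thesis using st astep_in[OF ins d] QEq r ins d
      by (cases "i \<in> X \<or> j \<in> X"; cases "\<sigma> ! i = None \<or> \<sigma> ! j = None") (simp_all add: ado_cases)
  qed
qed

lemma astep_sub:
  assumes st: "astep A u (q, \<sigma>, p, X) = ACont (q'', \<sigma>', p', O')"
  shows "O' \<subseteq> X \<and> length \<sigma>' = length \<sigma>"
proof -
  have ins: "0 \<le> p \<and> p < int (length u)" using st astep_out[of p u A q \<sigma> X] by auto
  obtain qu resp where d: "delta A q = (qu, resp)" by fastforce
  show ?thesis
  proof (cases qu)
    case (QTest f)
    obtain q' ac where r: "resp (f (u ! nat p)) = (q', ac)" by fastforce
    show ?thesis using st astep_in[OF ins d] QTest r ado_sub by simp
  next
    case (QEq i j)
    obtain q' ac where r: "resp (\<sigma> ! i = \<sigma> ! j) = (q', ac)" by fastforce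
    show ?thesis using st astep_in[OF ins d] QEq r ado_sub[of u q' ac "\<sigma>[i := None, j := None]" p X q'' \<sigma>' p' O']
      by (cases "i \<in> X \<or> j \<in> X"; cases "\<sigma> ! i = None \<or> \<sigma> ! j = None") simp_all
  qed
qed

lemma astep_cont:
  assumes wf: "wf_sutwa A" and ag: "agree (nregs A) \<pi> \<sigma> X \<eta>1 \<eta>2"
    and st: "astep A u (q, \<sigma>, p, X) = ACont (q'', \<sigma>', p', O')"
  shows "inside u (q, \<eta>1, p) \<and> (\<exists>\<eta>1' \<eta>2'. step A u (q, \<eta>1, p) = Cont (q'', \<eta>1', p') \<and>
     step A u (q, \<eta>2, p) = Cont (q'', \<eta>2', p') \<and> agree (nregs A) \<pi> \<sigma>' O' \<eta>1' \<eta>2')"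
proof -
  have ins: "0 \<le> p \<and> p < int (length u)" using st by (auto simp: astep_def split: if_splits)
  obtain qu resp where d: "delta A q = (qu, resp)" by fastforce
  show ?thesis
  proof (cases qu)
    case (QTest f)
    obtain q' ac where r: "resp (f (u ! nat p)) = (q', ac)" by fastforce
    have ad: "ado u q' ac \<sigma> p X = ACont (q'', \<sigma>', p', O')" using st ins d QTest r by (simp add: astep_def)
    have stl: "\<And>l g. ac = AStore l g \<Longrightarrow> l < nregs A" using wf_store[OF wf d] r by blast
    from ado_cont[OF ag stl ad] show ?thesis
      using ins d QTest r by (simp add: step_def inside_p)
  next
    case (QEq i j)
    have ij: "i < nregs A" "j < nregs A" using wf_eq[OF wf] d QEq by auto
    have nO: "i \<notin> X" "j \<notin> X" "\<sigma> ! i \<noteq> None" "\<sigma> ! j \<noteq> None"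
      using st ins d QEq by (auto simp: astep_def split: if_splits)
    have e: "\<eta>1 ! i = \<sigma> ! i" "\<eta>2 ! i = \<sigma> ! i" "\<eta>1 ! j = \<sigma> ! j" "\<eta>2 ! j = \<sigma> ! j"
      using ag ij nO unfolding agree_def by auto
    obtain q' ac where r: "resp (\<sigma> ! i = \<sigma> ! j) = (q', ac)" by fastforce
    have "ado u q' ac (\<sigma>[i := None, j := None]) p X = ACont (q'', \<sigma>', p', O')"
      using st ins d QEq r nO by (simp add: astep_def)
    moreover have "X - {i, j} = X" using nO by auto
    ultimately have ad: "ado u q' ac (\<sigma>[i := None, j := None]) p (X - {i,j}) = ACont (q'', \<sigma>', p', O')"
      by simp
    have stl: "\<And>l g. ac = AStore l g \<Longrightarrow> l < nregs A" using wf_store[OF wf d] r by blast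
    from ado_cont[OF agree_clear[OF ag ij] stl ad] show ?thesis
      using ins d QEq r nO e by (simp add: step_def inside_p)
  qed
qed

lemma astep_halt:
  assumes wf: "wf_sutwa A" and ag: "agree (nregs A) \<pi> \<sigma> X \<eta>1 \<eta>2"
    and st: "astep A u (q, \<sigma>, p, X) = AHalt b"
  shows "inside u (q, \<eta>1, p) \<and> step A u (q, \<eta>1, p) = Halt b \<and> step A u (q, \<eta>2, p) = Halt b"
proof -
  have ins: "0 \<le> p \<and> p < int (length u)" using st by (auto simp: astep_def split: if_splits)
  obtain qu resp where d: "delta A q = (qu, resp)" by fastforce
  show ?thesis
  proof (cases qu)
    case (QTest f)
    obtain q' ac where r: "resp (f (u ! nat p)) = (q', ac)" by fastforce
    have "ado u q' ac \<sigma> p X = AHalt b" using st ins d QTest r by (simp add: astep_def)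
    from ado_halt[OF this] show ?thesis
      using ins d QTest r by (simp add: step_def inside_p)
  next
    case (QEq i j)
    have ij: "i < nregs A" "j < nregs A" using wf_eq[OF wf] d QEq by auto
    have nO: "i \<notin> X" "j \<notin> X"
      using st ins d QEq by (auto simp: astep_def split: if_splits)
    have e: "\<eta>1 ! i = \<sigma> ! i" "\<eta>2 ! i = \<sigma> ! i" "\<eta>1 ! j = \<sigma> ! j" "\<eta>2 ! j = \<sigma> ! j"
      using ag ij nO unfolding agree_def by auto
    show ?thesis
    proof (cases "\<sigma> ! i = None \<or> \<sigma> ! j = None")
      case True
      then show ?thesis using st ins d QEq nO e by (auto simp: astep_def step_def inside_p)
    next
      case False
      obtain q' ac where r: "resp (\<sigma> ! i = \<sigma> ! j) = (q', ac)" by fastforce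
      obtain y1 y2 where nn: "\<sigma> ! i = Some y1" "\<sigma> ! j = Some y2" using False by auto
      have "ado u q' ac (\<sigma>[i := None, j := None]) p X = AHalt b"
        using st ins d QEq r nO False by (simp add: astep_def)
      from ado_halt[OF this] show ?thesis
        using ins d QEq r nO e nn by (simp add: step_def inside_p)
    qed
  qed
qed


lemma det_unique:
  assumes fn: "\<And>x y z. r x y \<Longrightarrow> r x z \<Longrightarrow> y = z"
  shows "r\<^sup>*\<^sup>* a b \<Longrightarrow> r\<^sup>*\<^sup>* a c \<Longrightarrow> \<forall>d. \<not> r b d \<Longrightarrow> \<forall>d. \<not> r c d \<Longrightarrow> b = c"
proof (induction arbitrary: c rule: converse_rtranclp_induct)
  case base
  then show ?case by (metis converse_rtranclpE)
next
  case (step a a')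
  note ih = step.IH and h1 = step.hyps(1) and pr = step.prems
  from pr(1) have "c = a \<or> (\<exists>y. r a y \<and> r\<^sup>*\<^sup>* y c)" by (metis converse_rtranclpE)
  then show ?case
  proof
    assume "c = a" then show ?thesis using pr(3) h1 by blast
  next
    assume "\<exists>y. r a y \<and> r\<^sup>*\<^sup>* y c"
    then obtain y where "r a y" "r\<^sup>*\<^sup>* y c" by blast
    then have "r\<^sup>*\<^sup>* a' c" using fn h1 by metis
    then show ?thesis using ih pr by blast
  qed
qed
lemma reach_inv:
  "(\<lambda>a b. astep A u a = ACont b)\<^sup>*\<^sup>* a b \<Longrightarrow>
   snd (snd (snd b)) \<subseteq> snd (snd (snd a)) \<and> length (fst (snd b)) = length (fst (snd a))"
proof (induction rule: rtranclp_induct)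
  case base
  then show ?case by simp
next
  case (step y z)
  obtain q1 s1 p1 o1 where y: "y = (q1, s1, p1, o1)" by (cases y) auto
  obtain q2 s2 p2 o2 where z: "z = (q2, s2, p2, o2)" by (cases z) auto
  show ?case using astep_sub[of A u q1 s1 p1 o1 q2 s2 p2 o2] step y z by auto
qed

definition atoms_of :: "regs \<Rightarrow> atom list" where
  "atoms_of \<sigma> = concat (map (\<lambda>x. case x of None \<Rightarrow> [] | Some a \<Rightarrow> [a]) \<sigma>)"

lemma atoms_of_len: "length (atoms_of \<sigma>) \<le> length \<sigma>"
proof (induction \<sigma>)
  case (Cons x xs)
  then show ?case by (cases x) (auto simp: atoms_of_def)
qed (simp add: atoms_of_def)

lemma atoms_of_in: "x < length \<sigma> \<Longrightarrow> \<sigma> ! x = Some a \<Longrightarrow> a \<in> set (atoms_of \<sigma>)"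
  unfolding atoms_of_def by (force simp: in_set_conv_nth)

lemma fixed_nth:
  assumes "agree k \<pi> \<sigma> X \<eta>1 \<eta>2" "x < k" "\<forall>a. \<sigma> ! x = Some a \<longrightarrow> \<pi> a = a"
  shows "\<eta>1 ! x = map_option \<pi> (\<eta>2 ! x)"
proof (cases "x \<in> X")
  case True
  then show ?thesis using assms unfolding agree_def by auto
next
  case False
  then have "\<eta>1 ! x = \<sigma> ! x" "\<eta>2 ! x = \<sigma> ! x" using assms unfolding agree_def by auto
  then show ?thesis using assms(3) by (cases "\<sigma> ! x") auto
qed

definition good :: "'q sutwa \<Rightarrow> letter list \<Rightarrow> 'q \<Rightarrow> regs \<Rightarrow> int \<Rightarrow> nat set \<Rightarrow> atom list \<Rightarrow> bool" where
  "good A u q \<sigma> p X S \<longleftrightarrow> (\<forall>\<pi> \<eta>1 \<eta>2. bij \<pi> \<longrightarrow> (\<forall>a\<in>set S. \<pi> a = a) \<longrightarrow>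
      agree (nregs A) \<pi> \<sigma> X \<eta>1 \<eta>2 \<longrightarrow>
      run_outcome A u (q, \<eta>1, p) = outcome_perm \<pi> (run_outcome A u (q, \<eta>2, p)))"

definition brnext :: "'q sutwa \<Rightarrow> letter list \<Rightarrow> 'q aconf \<Rightarrow> bool \<Rightarrow> 'q ares" where
  "brnext A u t b = (case t of (qt, \<sigma>t, pt, Ot) \<Rightarrow>
     (case delta A qt of (qu, resp) \<Rightarrow>
       (case qu of QEq i j \<Rightarrow> (case resp b of (q'', act) \<Rightarrow>
                    ado u q'' act (\<sigma>t[i := None, j := None]) pt (Ot - {i, j}))
        | QTest f \<Rightarrow> AExit)))"


lemma step_lemma:
  assumes wf: "wf_sutwa A"
  and IH: "\<And>q' \<sigma>' p' O'. card O' < card X \<Longrightarrow> O' \<subseteq> {..<nregs A} \<Longrightarrow> length \<sigma>' = nregs A \<Longrightarrow>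
             \<exists>S. length S \<le> M \<and> good A u q' \<sigma>' p' O' S"
  and Ok: "X \<subseteq> {..<nregs A}" and len: "length \<sigma> = nregs A"
  shows "\<exists>S. length S \<le> nregs A + 2 * M \<and> good A u q \<sigma> p X S"
proof -
  define k where "k = nregs A"
  define ar where "ar = (\<lambda>a b. astep A u a = ACont b)"
  define a0 where "a0 = (q, \<sigma>, p, X)"
  define T where "T t \<longleftrightarrow> ar\<^sup>*\<^sup>* a0 t \<and> (\<forall>b. \<not> ar t b)" for t
  define F where "F a = (case a of (q', \<sigma>', p', O') \<Rightarrow> SOME S. length S \<le> M \<and> good A u q' \<sigma>' p' O' S)" for a
  define Sb where "Sb t b = (if astep A u t = ABranch then (case brnext A u t b of ACont a \<Rightarrow> F a | _ \<Rightarrow> []) else [])" for t b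
  define S where "S = (if \<exists>t. T t then atoms_of (fst (snd (THE t. T t))) @ Sb (THE t. T t) True @ Sb (THE t. T t) False else [])"
  have fin: "finite X" using Ok finite_subset by blast
  have Tuniq: "t = t'" if "T t" "T t'" for t t'
    using det_unique[of ar a0 t t'] that unfolding T_def ar_def by auto
  have Treach: "O' \<subseteq> X \<and> length \<sigma>' = k" if "ar\<^sup>*\<^sup>* a0 (q', \<sigma>', p', O')" for q' \<sigma>' p' O'
    using reach_inv[of A u a0 "(q', \<sigma>', p', O')"] that len unfolding ar_def a0_def k_def by auto
  have Sb_good: "length (F (q'', \<sigma>'', p'', O'')) \<le> M \<and> good A u q'' \<sigma>'' p'' O'' (F (q'', \<sigma>'', p'', O''))"
    if "T t" "astep A u t = ABranch" "brnext A u t b = ACont (q'', \<sigma>'', p'', O'')" for t b q'' \<sigma>'' p'' O''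
  proof -
    note th = that
    obtain qt \<sigma>t pt Ot where t: "t = (qt, \<sigma>t, pt, Ot)" by (cases t) auto
    have "ar\<^sup>*\<^sup>* a0 (qt, \<sigma>t, pt, Ot)" using th(1) t unfolding T_def by simp
    then have r: "Ot \<subseteq> X" "length \<sigma>t = k" using Treach by blast+
    obtain i j resp where d: "delta A qt = (QEq i j, resp)" "i \<in> Ot \<or> j \<in> Ot"
      using astep_branch[of A u qt \<sigma>t pt Ot] th(2) t by auto
    obtain q3 act where rb: "resp b = (q3, act)" by fastforce
    have ad: "ado u q3 act (\<sigma>t[i := None, j := None]) pt (Ot - {i, j}) = ACont (q'', \<sigma>'', p'', O'')"
      using th(3) t d rb by (simp add: brnext_def)
    from ado_sub[OF ad] have s: "O'' \<subseteq> Ot - {i, j}" "length \<sigma>'' = k" using r by auto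
    have "O'' \<subset> Ot" using s d(2) by blast
    moreover have "finite Ot" using r fin finite_subset by blast
    ultimately have "card O'' < card Ot" by (simp add: psubset_card_mono)
    moreover have "card Ot \<le> card X" using r fin by (simp add: card_mono)
    ultimately have c: "card O'' < card X" by simp
    have "O'' \<subseteq> {..<nregs A}" using s r Ok by blast
    from IH[OF c this s(2)[unfolded k_def], of q'' p''] have
      "\<exists>S. length S \<le> M \<and> good A u q'' \<sigma>'' p'' O'' S" .
    from someI_ex[OF this] show ?thesis
      unfolding F_def by simp
  qed
  have Sb_len: "length (Sb t b) \<le> M" if "T t" for t b
    using Sb_good[OF that] unfolding Sb_def by (auto split: ares.splits)
  have Tlen: "length (fst (snd t)) = k" if "T t" for t
    using Treach that unfolding T_def by (cases t) auto
  have lenS: "length S \<le> k + 2 * M"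
  proof (cases "\<exists>t. T t")
    case True
    then obtain t where t: "T t" by blast
    have "(THE t. T t) = t" using t Tuniq by blast
    moreover have "length (Sb t True) \<le> M" "length (Sb t False) \<le> M" using Sb_len[OF t] by auto
    moreover have "length (atoms_of (fst (snd t))) \<le> k" using atoms_of_len[of "fst (snd t)"] Tlen[OF t] by simp
    ultimately show ?thesis using True unfolding S_def by simp
  qed (simp add: S_def)
  have inS: "set (atoms_of (fst (snd t))) \<subseteq> set S \<and> set (Sb t b) \<subseteq> set S" if "T t" for t b
  proof -
    have "(THE t. T t) = t" using that Tuniq by blast
    moreover have "\<exists>t. T t" using that by blast
    ultimately have "S = atoms_of (fst (snd t)) @ Sb t True @ Sb t False" unfolding S_def by simp
    then show ?thesis by (cases b) auto
  qed
  have "good A u q \<sigma> p X S"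
    unfolding good_def
  proof (intro allI impI)
    fix \<pi> \<eta>1 \<eta>2
    assume bij: "bij \<pi>" and fx: "\<forall>a\<in>set S. \<pi> a = a" and ag0: "agree (nregs A) \<pi> \<sigma> X \<eta>1 \<eta>2"
    have inj: "inj \<pi>" using bij bij_is_inj by blast
    define R where "R c1 c2 \<longleftrightarrow> (\<exists>q' \<sigma>' p' O' \<eta>1' \<eta>2'. ar\<^sup>*\<^sup>* a0 (q', \<sigma>', p', O') \<and>
         c1 = (q', \<eta>1', p') \<and> c2 = (q', \<eta>2', p') \<and> agree k \<pi> \<sigma>' O' \<eta>1' \<eta>2')" for c1 c2
    have fixT: "\<eta>1' ! x = map_option \<pi> (\<eta>2' ! x)"
      if "T (q', \<sigma>', p', O')" "agree k \<pi> \<sigma>' O' \<eta>1' \<eta>2'" "x < k" for q' \<sigma>' p' O' \<eta>1' \<eta>2' x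
    proof -
      have "\<forall>a. \<sigma>' ! x = Some a \<longrightarrow> \<pi> a = a"
      proof (intro allI impI)
        fix a assume "\<sigma>' ! x = Some a"
        then have "a \<in> set (atoms_of \<sigma>')" using atoms_of_in that(2,3) unfolding agree_def by auto
        then show "\<pi> a = a" using inS[OF that(1)] fx by auto
      qed
      then show ?thesis using fixed_nth that(2,3) by blast
    qed
    show "run_outcome A u (q, \<eta>1, p) = outcome_perm \<pi> (run_outcome A u (q, \<eta>2, p))"
    proof (rule G[where R = R])
      show "R (q, \<eta>1, p) (q, \<eta>2, p)" unfolding R_def a0_def using ag0 k_def by blast
    next
      fix c1 c2 assume "R c1 c2"
      then show "inside u c1 = inside u c2" unfolding R_def by (auto simp: inside_p)
    next
      fix c1 c2 assume "R c1 c2" "\<not> inside u c1"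
      then obtain q' \<sigma>' p' O' \<eta>1' \<eta>2' where h: "ar\<^sup>*\<^sup>* a0 (q', \<sigma>', p', O')"
         "c1 = (q', \<eta>1', p')" "c2 = (q', \<eta>2', p')" "agree k \<pi> \<sigma>' O' \<eta>1' \<eta>2'"
        unfolding R_def by blast
      have "astep A u (q', \<sigma>', p', O') = AExit" using \<open>\<not> inside u c1\<close> h(2)
        by (simp add: astep_def inside_p)
      then have T: "T (q', \<sigma>', p', O')" using h(1) unfolding T_def ar_def by simp
      have "\<eta>1' = regs_perm \<pi> \<eta>2'"
        using fixT[OF T h(4)] h(4) unfolding regs_perm_def agree_def
        by (auto intro: nth_equalityI)
      then show "exit_outcome u c1 = outcome_perm \<pi> (exit_outcome u c2)"
        using h by (simp add: exit_outcome_def)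
    next
      fix c1 c2 assume "R c1 c2" and ins: "inside u c1"
      then obtain q' \<sigma>' p' O' \<eta>1' \<eta>2' where h: "ar\<^sup>*\<^sup>* a0 (q', \<sigma>', p', O')"
         "c1 = (q', \<eta>1', p')" "c2 = (q', \<eta>2', p')" "agree k \<pi> \<sigma>' O' \<eta>1' \<eta>2'"
        unfolding R_def by blast
      have ag: "agree (nregs A) \<pi> \<sigma>' O' \<eta>1' \<eta>2'" using h(4) k_def by simp
      show "(\<exists>b. step A u c1 = Halt b \<and> step A u c2 = Halt b) \<or>
         (\<exists>c1' c2'. step A u c1 = Cont c1' \<and> step A u c2 = Cont c2' \<and> R c1' c2') \<or>
         run_outcome A u c1 = outcome_perm \<pi> (run_outcome A u c2)"
      proof (cases "astep A u (q', \<sigma>', p', O')")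
        case (ACont a')
        obtain q3 \<sigma>3 p3 O3 where a': "a' = (q3, \<sigma>3, p3, O3)" by (cases a') auto
        from astep_cont[OF wf ag ACont[unfolded a']] obtain \<eta>1'' \<eta>2'' where
          s: "step A u c1 = Cont (q3, \<eta>1'', p3)" "step A u c2 = Cont (q3, \<eta>2'', p3)"
             "agree (nregs A) \<pi> \<sigma>3 O3 \<eta>1'' \<eta>2''" using h by auto
        have "ar\<^sup>*\<^sup>* a0 (q3, \<sigma>3, p3, O3)" using h(1) ACont a' unfolding ar_def
          by (simp add: rtranclp.rtrancl_into_rtrancl)
        then have "R (q3, \<eta>1'', p3) (q3, \<eta>2'', p3)" using s(3) unfolding R_def k_def by blast
        then show ?thesis using s by blast
      next
        case (AHalt b)
        then show ?thesis using astep_halt[OF wf ag AHalt] h by blast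
      next
        case AExit
        then show ?thesis using astep_exit[OF AExit] ins h by blast
      next
        case ABranch
        then have T: "T (q', \<sigma>', p', O')" using h(1) unfolding T_def ar_def by simp
        obtain i j resp where d: "delta A q' = (QEq i j, resp)"
          using astep_branch[OF ABranch] by blast
        have ij: "i < k" "j < k" using wf_eq[OF wf d] k_def by auto
        have fi: "\<eta>1' ! i = map_option \<pi> (\<eta>2' ! i)" "\<eta>1' ! j = map_option \<pi> (\<eta>2' ! j)"
          using fixT[OF T h(4)] ij by auto
        show ?thesis
        proof (cases "\<eta>2' ! i = None \<or> \<eta>2' ! j = None")
          case True
          then have "step A u c1 = Halt False \<and> step A u c2 = Halt False"
            using h d fi by (auto simp: step_def)
          then show ?thesis by blast
        next
          case False
          have ans: "(\<eta>1' ! i = \<eta>1' ! j) = (\<eta>2' ! i = \<eta>2' ! j)"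
          proof -
            have mo: "(map_option \<pi> x = map_option \<pi> y) = (x = y)" for x y
              using inj by (cases x; cases y) (auto simp: inj_eq)
            show ?thesis using fi mo by simp
          qed
          define b where "b = (\<eta>2' ! i = \<eta>2' ! j)"
          obtain q3 act where rb: "resp b = (q3, act)" by fastforce
          have st: "step A u c1 = do_action u q3 act (\<eta>1'[i := None, j := None]) p'"
                   "step A u c2 = do_action u q3 act (\<eta>2'[i := None, j := None]) p'"
            using h d fi False ans rb unfolding b_def by (auto simp: step_def)
          have bn: "brnext A u (q', \<sigma>', p', O') b = ado u q3 act (\<sigma>'[i := None, j := None]) p' (O' - {i, j})"
            using d rb by (simp add: brnext_def)
          have agc: "agree k \<pi> (\<sigma>'[i := None, j := None]) (O' - {i, j}) (\<eta>1'[i := None, j := None]) (\<eta>2'[i := None, j := None])"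
            using agree_clear[OF h(4) ij] .
          have stl: "\<And>l g. act = AStore l g \<Longrightarrow> l < k" using wf_store[OF wf d] rb k_def by blast
          show ?thesis
          proof (cases "ado u q3 act (\<sigma>'[i := None, j := None]) p' (O' - {i, j})")
            case (ACont a'')
            obtain q4 \<sigma>4 p4 O4 where a'': "a'' = (q4, \<sigma>4, p4, O4)" by (cases a'') auto
            have ex: "\<exists>\<eta>1'' \<eta>2''. do_action u q3 act (\<eta>1'[i := None, j := None]) p' = Cont (q4, \<eta>1'', p4) \<and>
               do_action u q3 act (\<eta>2'[i := None, j := None]) p' = Cont (q4, \<eta>2'', p4) \<and> agree k \<pi> \<sigma>4 O4 \<eta>1'' \<eta>2''"
              using ado_cont[of k \<pi> "\<sigma>'[i := None, j := None]" "O' - {i, j}" "\<eta>1'[i := None, j := None]"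
                 "\<eta>2'[i := None, j := None]" act u q3 p' q4 \<sigma>4 p4 O4] agc stl ACont a'' by blast
            from ex obtain \<eta>1'' \<eta>2'' where
              s: "step A u c1 = Cont (q4, \<eta>1'', p4)" "step A u c2 = Cont (q4, \<eta>2'', p4)"
                 "agree k \<pi> \<sigma>4 O4 \<eta>1'' \<eta>2''" using st by auto
            have bn': "brnext A u (q', \<sigma>', p', O') b = ACont (q4, \<sigma>4, p4, O4)" using bn ACont a'' by simp
            from Sb_good[OF T ABranch bn'] have g: "good A u q4 \<sigma>4 p4 O4 (F (q4, \<sigma>4, p4, O4))" by simp
            have "Sb (q', \<sigma>', p', O') b = F (q4, \<sigma>4, p4, O4)" using ABranch bn' unfolding Sb_def by simp
            then have "\<forall>a\<in>set (F (q4, \<sigma>4, p4, O4)). \<pi> a = a" using inS[OF T, of b] fx by auto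
            then have "run_outcome A u (q4, \<eta>1'', p4) = outcome_perm \<pi> (run_outcome A u (q4, \<eta>2'', p4))"
              using g bij s(3) k_def unfolding good_def by auto
            moreover have "inside u c2" using ins h by (simp add: inside_p)
            ultimately have "run_outcome A u c1 = outcome_perm \<pi> (run_outcome A u c2)"
              using run_cont[OF ins s(1)] run_cont[OF _ s(2)] by simp
            then show ?thesis by blast
          next
            case (AHalt bb)
            then show ?thesis using ado_halt[OF AHalt] st by metis
          qed (use ado_cases in metis)+
        qed
      qed
    qed
  qed
  then show ?thesis using lenS k_def by blast
qed


fun Bf :: "nat \<Rightarrow> nat \<Rightarrow> nat" where
  "Bf k 0 = k"
| "Bf k (Suc n) = k + 2 * Bf k n"

lemma main_ind:
  assumes wf: "wf_sutwa A"
  shows "\<forall>q \<sigma> p X. card X \<le> n \<longrightarrow> X \<subseteq> {..<nregs A} \<longrightarrow> length \<sigma> = nregs A \<longrightarrow>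
           (\<exists>S. length S \<le> Bf (nregs A) n \<and> good A u q \<sigma> p X S)"
proof (induction n)
  case 0
  show ?case
  proof (intro allI impI)
    fix q and \<sigma> :: regs and p :: int and X assume "card (X::nat set) \<le> 0" "X \<subseteq> {..<nregs A}" "length \<sigma> = nregs A"
    then show "\<exists>S. length S \<le> Bf (nregs A) 0 \<and> good A u q \<sigma> p X S"
      using step_lemma[OF wf, of X 0 u \<sigma> q p] by auto
  qed
next
  case (Suc n)
  show ?case
  proof (intro allI impI)
    fix q and \<sigma> :: regs and p :: int and X assume a: "card (X::nat set) \<le> Suc n" "X \<subseteq> {..<nregs A}" "length \<sigma> = nregs A"
    have "\<exists>S. length S \<le> Bf (nregs A) n \<and> good A u q' \<sigma>' p' O' S"
      if "card O' < card X" "O' \<subseteq> {..<nregs A}" "length \<sigma>' = nregs A" for q' \<sigma>' p' O'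
      using Suc.IH that a(1) by auto
    then show "\<exists>S. length S \<le> Bf (nregs A) (Suc n) \<and> good A u q \<sigma> p X S"
      using step_lemma[OF wf, of X "Bf (nregs A) n" u \<sigma> q p] a by auto
  qed
qed

theorem mainTheorem2:
  fixes A :: "('q::finite) sutwa"
  assumes "wf_sutwa A"
  shows "\<exists>N::nat. \<forall>u \<in> lists (letters (alph A)).
           \<exists>as::atom list. length as \<le> N \<and> supports_profile as (shepherdson_profile A u)"
proof -
  define k where "k = nregs A"
  obtain qs :: "'q list" where qs: "distinct qs" "set qs = UNIV"
    using finite_distinct_list[of "UNIV :: 'q set"] by auto
  have lqs: "length qs = card (UNIV :: 'q set)" using qs distinct_card by fastforce
  have "\<forall>u \<in> lists (letters (alph A)).
           \<exists>as::atom list. length as \<le> card (UNIV :: 'q set) * (2 * Bf k k) \<and> supports_profile as (shepherdson_profile A u)"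
  proof
    fix u assume "u \<in> lists (letters (alph A))"
    define pos where "pos d = (case d of LeftSide \<Rightarrow> 0 | RightSide \<Rightarrow> int (length u) - 1)" for d
    have "\<forall>q d. \<exists>S. length S \<le> Bf k k \<and> good A u q (replicate k None) (pos d) {..<k} S"
      using main_ind[OF assms, of k u] k_def by auto
    then obtain Sf where Sf: "\<And>q d. length (Sf q d) \<le> Bf k k \<and> good A u q (replicate k None) (pos d) {..<k} (Sf q d)"
      by metis
    define S where "S = concat (map (\<lambda>q. Sf q LeftSide @ Sf q RightSide) qs)"
    have "length S \<le> length qs * (2 * Bf k k)"
      unfolding S_def length_concat
    proof (induction qs)
      case (Cons a qs)
      then show ?case using Sf[of a LeftSide] Sf[of a RightSide] by simp
    qed simp
    then have lenS: "length S \<le> card (UNIV :: 'q set) * (2 * Bf k k)" using lqs by simp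
    have sub: "set (Sf q d) \<subseteq> set S" for q d
      using qs(2) unfolding S_def by (cases d) auto
    have "supports_profile S (shepherdson_profile A u)"
      unfolding supports_profile_def
    proof (intro allI impI ext)
      fix \<pi> and x :: "'q \<times> regs \<times> side" assume aut: "atom_aut \<pi>" and fx: "\<forall>a\<in>set S. \<pi> a = a"
      have bij: "bij \<pi>" using aut atom_aut_def by blast
      obtain q \<eta> d where x: "x = (q, \<eta>, d)" by (cases x) auto
      show "profile_perm \<pi> (shepherdson_profile A u) x = shepherdson_profile A u x"
      proof (cases "length \<eta> = k")
        case False
        then show ?thesis unfolding x profile_perm_def shepherdson_profile_def regs_perm_def k_def by simp
      next
        case True
        have ag: "agree (nregs A) \<pi> (replicate k None) {..<k} \<eta> (regs_perm (inv \<pi>) \<eta>)"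
          unfolding agree_def regs_perm_def using True k_def bij
          by (auto simp: option.map_comp bij_is_surj surj_f_inv_f o_def option.map_ident)
        have "run_outcome A u (q, \<eta>, pos d) = outcome_perm \<pi> (run_outcome A u (q, regs_perm (inv \<pi>) \<eta>, pos d))"
          using Sf[of q d] bij ag fx sub[of q d] unfolding good_def by blast
        moreover have "start_config u q e d = (q, e, pos d)" for e
          by (simp add: start_config_def pos_def)
        ultimately show ?thesis using True
          unfolding x profile_perm_def shepherdson_profile_def k_def
          by (simp add: regs_perm_def)
      qed
    qed
    then show "\<exists>as::atom list. length as \<le> card (UNIV :: 'q set) * (2 * Bf k k) \<and> supports_profile as (shepherdson_profile A u)"
      using lenS by blast
  qed
  then show ?thesis by blast
qed

end
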